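(* In the setting of the context, for every $n\in\mathbb Z$, $$\psi_n=\int_0^{2\pi}\phi(\theta)A_n(\theta)\frac{d\theta}{2\pi},\qquad\psi^*_n=\int_0^{2\pi}\phi^*(\theta)A^*_n(\theta)\frac{d\theta}{2\pi},$$ where $$A_n(\theta)=\frac{e^{-in\theta}}{C_n\prod_{j\le n-1}(1+S_je^{-i\theta})\prod_{j\ge n+1}(1-S_je^{i\theta})}\Big\{\frac{1}{1+S_ne^{-i\theta}}+\frac{1}{1-S_ne^{i\theta}}-1\Big\},$$ $$A^*_n(\theta)=\frac{e^{in\theta}}{C_n\prod_{j\le n-1}(1-S_je^{i\theta})\prod_{j\ge n+1}(1+S_je^{-i\theta})}\Big\{\frac{1}{1+S_ne^{-i\theta}}+\frac{1}{1-S_ne^{i\theta}}-1\Big\}.$$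
   Context: Let $\psi_n,\psi^*_n$ ($n\in\mathbb Z$) be operators (formal symbols), let $\gamma_n\ge0$ with only finitely many nonzero, $S_n=\sinh\gamma_n<1$, $C_n=\cosh\gamma_n$, and define the formal linear combinations $\phi(\theta)=\sum_nC_ne^{in\theta}\prod_{j\le n-1}(1+S_je^{-i\theta})\prod_{j\ge n+1}(1-S_je^{i\theta})\psi_n$ and $\phi^*(\theta)=\sum_nC_ne^{-in\theta}\prod_{j\le n-1}(1-S_je^{i\theta})\prod_{j\ge n+1}(1+S_je^{-i\theta})\psi^*_n$. The integrals are taken coefficientwise in the $\psi_k$ (resp. $\psi^*_k$). *)

theory Defs
  imports "HOL-Analysis.Analysis"
begin

text \<open>Since only finitely many gamma_j are nonzero, the infinite products over j <= n-1
  and j >= n+1 reduce to finite products over the support of gamma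
  (factors with gamma_j = 0 are equal to 1).\<close>

definition S :: "(int \<Rightarrow> real) \<Rightarrow> int \<Rightarrow> real" where
  "S \<gamma> j = sinh (\<gamma> j)"

definition C :: "(int \<Rightarrow> real) \<Rightarrow> int \<Rightarrow> real" where
  "C \<gamma> j = cosh (\<gamma> j)"

definition Lprod :: "(int \<Rightarrow> real) \<Rightarrow> int \<Rightarrow> real \<Rightarrow> complex" where
  "Lprod \<gamma> n \<theta> = (\<Prod>j\<in>{j. j < n \<and> \<gamma> j \<noteq> 0}. 1 + of_real (S \<gamma> j) * exp (- \<i> * of_real \<theta>))"

definition Rprod :: "(int \<Rightarrow> real) \<Rightarrow> int \<Rightarrow> real \<Rightarrow> complex" where
  "Rprod \<gamma> n \<theta> = (\<Prod>j\<in>{j. n < j \<and> \<gamma> j \<noteq> 0}. 1 - of_real (S \<gamma> j) * exp (\<i> * of_real \<theta>))"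

definition Lprod_star :: "(int \<Rightarrow> real) \<Rightarrow> int \<Rightarrow> real \<Rightarrow> complex" where
  "Lprod_star \<gamma> n \<theta> = (\<Prod>j\<in>{j. j < n \<and> \<gamma> j \<noteq> 0}. 1 - of_real (S \<gamma> j) * exp (\<i> * of_real \<theta>))"

definition Rprod_star :: "(int \<Rightarrow> real) \<Rightarrow> int \<Rightarrow> real \<Rightarrow> complex" where
  "Rprod_star \<gamma> n \<theta> = (\<Prod>j\<in>{j. n < j \<and> \<gamma> j \<noteq> 0}. 1 + of_real (S \<gamma> j) * exp (- \<i> * of_real \<theta>))"

text \<open>Coefficient of psi_n in phi(theta), and of psi*_n in phi*(theta).\<close>
definition phi_coeff :: "(int \<Rightarrow> real) \<Rightarrow> int \<Rightarrow> real \<Rightarrow> complex" where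
  "phi_coeff \<gamma> n \<theta> = of_real (C \<gamma> n) * exp (\<i> * of_int n * of_real \<theta>) * Lprod \<gamma> n \<theta> * Rprod \<gamma> n \<theta>"

definition phi_star_coeff :: "(int \<Rightarrow> real) \<Rightarrow> int \<Rightarrow> real \<Rightarrow> complex" where
  "phi_star_coeff \<gamma> n \<theta> = of_real (C \<gamma> n) * exp (- \<i> * of_int n * of_real \<theta>) * Lprod_star \<gamma> n \<theta> * Rprod_star \<gamma> n \<theta>"

definition Bracket :: "(int \<Rightarrow> real) \<Rightarrow> int \<Rightarrow> real \<Rightarrow> complex" where
  "Bracket \<gamma> n \<theta> = 1 / (1 + of_real (S \<gamma> n) * exp (- \<i> * of_real \<theta>))
                    + 1 / (1 - of_real (S \<gamma> n) * exp (\<i> * of_real \<theta>)) - 1"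

definition A :: "(int \<Rightarrow> real) \<Rightarrow> int \<Rightarrow> real \<Rightarrow> complex" where
  "A \<gamma> n \<theta> = exp (- \<i> * of_int n * of_real \<theta>)
      / (of_real (C \<gamma> n) * Lprod \<gamma> n \<theta> * Rprod \<gamma> n \<theta>) * Bracket \<gamma> n \<theta>"

definition A_star :: "(int \<Rightarrow> real) \<Rightarrow> int \<Rightarrow> real \<Rightarrow> complex" where
  "A_star \<gamma> n \<theta> = exp (\<i> * of_int n * of_real \<theta>)
      / (of_real (C \<gamma> n) * Lprod_star \<gamma> n \<theta> * Rprod_star \<gamma> n \<theta>) * Bracket \<gamma> n \<theta>"

end

theory Submission imports Defs "HOL-Complex_Analysis.Complex_Analysis" begin

lemma mean_value_circle:
  fixes h :: "complex \<Rightarrow> complex"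
  assumes "continuous_on (cball 0 1) h" "h holomorphic_on ball 0 1"
  shows "((\<lambda>t. h (cis t)) has_integral (2 * of_real pi * h 0)) {0..2*pi}"
proof -
  have "((\<lambda>u. h u/(u-0)) has_contour_integral (2 * of_real pi * \<i> * h 0)) (circlepath 0 1)"
    by (rule Cauchy_integral_circlepath[OF assms]) simp
  hence "((\<lambda>t. h (0 + 1 * cis t) / (0 + 1 * cis t - 0) * 1 * \<i> * cis t) has_integral (2 * of_real pi * \<i> * h 0)) {0..2*pi}"
    unfolding circlepath_def using has_contour_integral_part_circlepath_iff[of 0 "2*pi"] by simp
  hence "((\<lambda>t. \<i> * h (cis t)) has_integral (2 * of_real pi * \<i> * h 0)) {0..2*pi}"
  proof (rule has_integral_eq[rotated])
    fix t show "h (0 + 1 * cis t) / (0 + 1 * cis t - 0) * 1 * \<i> * cis t = \<i> * h (cis t)"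
      using cis_neq_zero[of t] by (simp add: field_simps)
  qed
  hence "((\<lambda>t. h (cis t)) has_integral (2 * of_real pi * \<i> * h 0) / \<i>) {0..2*pi}"
    using has_integral_mult_right_iff[of \<i> "\<lambda>t. h (cis t)"] by simp
  moreover have "(2 * of_real pi * \<i> * h 0) / \<i> = 2 * of_real pi * h 0" by simp
  ultimately show ?thesis by metis
qed

lemma reflect_2pi:
  fixes f :: "real \<Rightarrow> complex"
  assumes "(f has_integral I) {0..2*pi}"
  shows "((\<lambda>t. f (2*pi - t)) has_integral I) {0..2*pi}"
proof -
  have "((\<lambda>x. f (-x)) has_integral I) {-(2*pi)..-0}" using assms by (simp only: has_integral_reflect_real)
  hence "((\<lambda>x. f (-(x + -2*pi))) has_integral I) {-(2*pi) - -2*pi..-0 - -2*pi}"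
    by (rule has_integral_shift_real_ivl)
  thus ?thesis by simp
qed

lemma reflect_cis:
  fixes F :: "complex \<Rightarrow> complex"
  assumes "((\<lambda>t. F (cis t)) has_integral I) {0..2*pi}"
  shows "((\<lambda>t. F (1 / cis t)) has_integral I) {0..2*pi}"
proof -
  have "((\<lambda>t. F (cis (2*pi - t))) has_integral I) {0..2*pi}" using reflect_2pi[OF assms] .
  moreover have "cis (2*pi - t) = 1 / cis t" for t
  proof -
    have "cis (2*pi - t) = cis (2*pi) * cis (-t)" by (simp only: cis_mult) simp
    also have "\<dots> = cis (-t)" by simp
    also have "\<dots> = inverse (cis t)" by (simp only: cis_inverse)
    finally show ?thesis by (simp add: divide_inverse)
  qed
  ultimately show ?thesis by simp
qed


definition Lz :: "(int \<Rightarrow> real) \<Rightarrow> int \<Rightarrow> complex \<Rightarrow> complex" where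
  "Lz s n z = (\<Prod>j\<in>{j. j < n \<and> s j \<noteq> 0}. 1 + of_real (s j) / z)"
definition Rz :: "(int \<Rightarrow> real) \<Rightarrow> int \<Rightarrow> complex \<Rightarrow> complex" where
  "Rz s n z = (\<Prod>j\<in>{j. n < j \<and> s j \<noteq> 0}. 1 - of_real (s j) * z)"
definition Bz :: "(int \<Rightarrow> real) \<Rightarrow> int \<Rightarrow> complex \<Rightarrow> complex" where
  "Bz s n z = 1 / (1 + of_real (s n) / z) + 1 / (1 - of_real (s n) * z) - 1"
definition Pz :: "(int \<Rightarrow> real) \<Rightarrow> (int \<Rightarrow> real) \<Rightarrow> int \<Rightarrow> complex \<Rightarrow> complex" where
  "Pz s c k z = of_real (c k) * z powi k * Lz s k z * Rz s k z"
definition Az :: "(int \<Rightarrow> real) \<Rightarrow> (int \<Rightarrow> real) \<Rightarrow> int \<Rightarrow> complex \<Rightarrow> complex" where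
  "Az s c n z = z powi (-n) / (of_real (c n) * Lz s n z * Rz s n z) * Bz s n z"

lemma nz_minus:
  fixes z :: complex
  assumes "\<bar>a\<bar> < 1" "norm z \<le> 1"
  shows "1 - of_real a * z \<noteq> 0"
proof
  assume "1 - of_real a * z = 0"
  hence "of_real a * z = 1" by simp
  hence "norm (of_real a * z) = 1" by simp
  moreover have "norm (of_real a * z) = \<bar>a\<bar> * norm z" by (simp only: norm_mult norm_of_real)
  moreover have "\<bar>a\<bar> * norm z \<le> \<bar>a\<bar>" using mult_left_le[of "norm z" "\<bar>a\<bar>"] assms by simp
  ultimately show False using assms by linarith
qed

lemma nz_plus:
  fixes z :: complex
  assumes "\<bar>a\<bar> < 1" "norm z \<le> 1"
  shows "1 + of_real a * z \<noteq> 0"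
  using nz_minus[of "-a" z] assms by simp

lemma nz_plus_div:
  fixes z :: complex
  assumes "\<bar>a\<bar> < 1" "norm z = 1"
  shows "1 + of_real a / z \<noteq> 0"
proof -
  have "norm (1/z) = 1" using assms by (simp add: norm_divide)
  thus ?thesis using nz_plus[of a "1/z"] assms by simp
qed

lemma alg1:
  fixes a p q L R B :: complex
  assumes "a \<noteq> 0" "L \<noteq> 0" "R \<noteq> 0" "p * q = 1"
  shows "(a * p * L * R) * (q / (a * L * R) * B) = B"
  using assms by (simp add: field_simps)

lemma swap_ident:
  fixes z :: complex
  assumes "z \<noteq> 0"
  shows "Pz s c k z * Az s c n z =
    Pz (\<lambda>j. - s (-j)) (\<lambda>j. c (-j)) (-k) (1/z) * Az (\<lambda>j. - s (-j)) (\<lambda>j. c (-j)) (-n) (1/z)"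
proof -
  let ?t = "\<lambda>j. - s (-j)"
  have L: "Lz ?t (-m) (1/z) = Rz s m z" for m
    unfolding Lz_def Rz_def
    by (rule prod.reindex_bij_witness[of _ uminus uminus]) (auto simp: divide_inverse)
  have R: "Rz ?t (-m) (1/z) = Lz s m z" for m
    unfolding Lz_def Rz_def
    by (rule prod.reindex_bij_witness[of _ uminus uminus]) (auto simp: divide_inverse)
  have B: "Bz ?t (-n) (1/z) = Bz s n z"
    unfolding Bz_def by (simp add: divide_inverse)
  have p1: "(1/z) powi (-k) = z powi k" by (simp add: power_int_minus power_int_inverse divide_inverse)
  have p2: "(1/z) powi (- (-n)) = z powi (-n)" by (simp add: power_int_minus power_int_inverse divide_inverse)
  show ?thesis unfolding Pz_def Az_def L R B p1 p2 by (simp add: mult_ac)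
qed

locale seqs =
  fixes s c :: "int \<Rightarrow> real"
  assumes sb: "\<And>j. \<bar>s j\<bar> < 1" and fin: "finite {j. s j \<noteq> 0}" and cnz: "\<And>j. c j \<noteq> 0"
begin

lemma finL: "finite {j. j < n \<and> s j \<noteq> 0}" by (rule finite_subset[OF _ fin]) auto
lemma finR: "finite {j. n < j \<and> s j \<noteq> 0}" by (rule finite_subset[OF _ fin]) auto

lemma Lz_nz: "norm (z::complex) = 1 \<Longrightarrow> Lz s n z \<noteq> 0"
  unfolding Lz_def using finL nz_plus_div[OF sb] by (simp add: prod_zero_iff)
lemma Rz_nz: "norm (z::complex) \<le> 1 \<Longrightarrow> Rz s n z \<noteq> 0"
  unfolding Rz_def using finR nz_minus[OF sb] by (simp add: prod_zero_iff)

lemma eq_case: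
  fixes z :: complex
  assumes "norm z = 1"
  shows "Pz s c n z * Az s c n z = Bz s n z"
proof -
  have z: "z \<noteq> 0" using assms by auto
  have "z powi n * z powi (-n) = 1" using z by (simp add: power_int_minus)
  thus ?thesis using Lz_nz[OF assms, of n] Rz_nz[of z n] assms cnz[of n] unfolding Pz_def Az_def
    by (intro alg1) auto
qed

lemma int_eq:
  "((\<lambda>t. Pz s c n (cis t) * Az s c n (cis t)) has_integral 2 * of_real pi) {0..2*pi}"
proof -
  define h1 where "h1 w = 1 / (1 + of_real (s n) * w)" for w :: complex
  define h2 where "h2 w = 1 / (1 - of_real (s n) * w)" for w :: complex
  have c1: "continuous_on (cball 0 1) h1" unfolding h1_def
    by (intro continuous_intros) (use nz_plus[OF sb] in auto)
  have o1: "h1 holomorphic_on ball 0 1" unfolding h1_def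
    by (intro holomorphic_intros) (use nz_plus[OF sb] in auto)
  have c2: "continuous_on (cball 0 1) h2" unfolding h2_def
    by (intro continuous_intros) (use nz_minus[OF sb] in auto)
  have o2: "h2 holomorphic_on ball 0 1" unfolding h2_def
    by (intro holomorphic_intros) (use nz_minus[OF sb] in auto)
  have I1: "((\<lambda>t. h1 (1 / cis t)) has_integral 2 * of_real pi) {0..2*pi}"
    using reflect_cis[OF mean_value_circle[OF c1 o1]] by (simp add: h1_def)
  have I2: "((\<lambda>t. h2 (cis t)) has_integral 2 * of_real pi) {0..2*pi}"
    using mean_value_circle[OF c2 o2] by (simp add: h2_def)
  have I3: "((\<lambda>t. 1::complex) has_integral 2 * of_real pi) {0..2*pi}"
    using has_integral_const_real[of "1::complex" 0 "2*pi"] by (simp add: scaleR_conv_of_real)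
  have "((\<lambda>t. h1 (1 / cis t) + h2 (cis t) - 1) has_integral
          2 * of_real pi + 2 * of_real pi - 2 * of_real pi) {0..2*pi}"
    by (intro has_integral_diff has_integral_add I1 I2 I3)
  hence "((\<lambda>t. h1 (1 / cis t) + h2 (cis t) - 1) has_integral 2 * of_real pi) {0..2*pi}" by simp
  thus ?thesis
  proof (rule has_integral_eq[rotated])
    fix t
    have "Pz s c n (cis t) * Az s c n (cis t) = Bz s n (cis t)" by (rule eq_case) simp
    also have "\<dots> = h1 (1 / cis t) + h2 (cis t) - 1" unfolding Bz_def h1_def h2_def
      by (simp add: divide_inverse)
    finally show "h1 (1 / cis t) + h2 (cis t) - 1 = Pz s c n (cis t) * Az s c n (cis t)" by simp
  qed
qed

lemma split_L:
  assumes "n \<le> k"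
  shows "Lz s k z = Lz s n z * (\<Prod>j\<in>{n..<k}. 1 + of_real (s j) / z)"
proof -
  have e: "{j. j < k \<and> s j \<noteq> 0} = {j. j < n \<and> s j \<noteq> 0} \<union> {j\<in>{n..<k}. s j \<noteq> 0}"
    using assms by auto
  have "Lz s k z = Lz s n z * (\<Prod>j\<in>{j\<in>{n..<k}. s j \<noteq> 0}. 1 + of_real (s j) / z)"
    unfolding Lz_def e by (rule prod.union_disjoint) (use finL in auto)
  also have "(\<Prod>j\<in>{j\<in>{n..<k}. s j \<noteq> 0}. 1 + of_real (s j) / z) = (\<Prod>j\<in>{n..<k}. 1 + of_real (s j) / z)"
    by (rule prod.mono_neutral_left) auto
  finally show ?thesis .
qed

lemma split_R:
  assumes "n \<le> k"
  shows "Rz s n z = Rz s k z * (\<Prod>j\<in>{n<..k}. 1 - of_real (s j) * z)"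
proof -
  have fB: "finite {j\<in>{n<..k}. s j \<noteq> 0}" by (rule finite_subset[of _ "{n<..k}"]) auto
  have e: "{j. n < j \<and> s j \<noteq> 0} = {j. k < j \<and> s j \<noteq> 0} \<union> {j\<in>{n<..k}. s j \<noteq> 0}"
    using assms by auto
  have "Rz s n z = Rz s k z * (\<Prod>j\<in>{j\<in>{n<..k}. s j \<noteq> 0}. 1 - of_real (s j) * z)"
    unfolding Rz_def e by (rule prod.union_disjoint) (use finR fB in auto)
  also have "(\<Prod>j\<in>{j\<in>{n<..k}. s j \<noteq> 0}. 1 - of_real (s j) * z) = (\<Prod>j\<in>{n<..k}. 1 - of_real (s j) * z)"
    by (rule prod.mono_neutral_left) auto
  finally show ?thesis .
qed

definition hgt :: "int \<Rightarrow> int \<Rightarrow> complex \<Rightarrow> complex" where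
  "hgt k n z = of_real (c k / c n) * ((z + of_real (s n)) / (1 - of_real (s n) * z) - of_real (s n))
      * (\<Prod>j\<in>{n<..<k}. z + of_real (s j)) / (\<Prod>j\<in>{n<..k}. 1 - of_real (s j) * z)"

lemma gt_ident:
  fixes z :: complex
  assumes z1: "norm z = 1" and nk: "n < k"
  shows "Pz s c k z * Az s c n z = hgt k n z"
proof -
  have z: "z \<noteq> 0" using z1 by auto
  define m where "m = nat (k - n - 1)"
  define L where "L = Lz s n z"
  define R where "R = Rz s k z"
  define L1 where "L1 = 1 + of_real (s n) / z"
  define Q where "Q = (\<Prod>j\<in>{n<..<k}. 1 + of_real (s j) / z)"
  define P where "P = (\<Prod>j\<in>{n<..<k}. z + of_real (s j))"
  define R' where "R' = (\<Prod>j\<in>{n<..k}. 1 - of_real (s j) * z)"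
  define B where "B = Bz s n z"
  have LnZ: "L \<noteq> 0" unfolding L_def using Lz_nz[OF z1] .
  have RnZ: "R \<noteq> 0" unfolding R_def using Rz_nz[of z] z1 by simp
  have L1nZ: "L1 \<noteq> 0" unfolding L1_def using nz_plus_div[OF sb z1] .
  have s1: "1 - of_real (s n) * z \<noteq> 0" using nz_minus[OF sb] z1 by simp
  have ins: "{n..<k} = insert n {n<..<k}" using nk by auto
  have eL: "Lz s k z = L * (L1 * Q)"
    unfolding L_def L1_def Q_def split_L[of n k z, OF less_imp_le[OF nk]] ins by simp
  have eR: "Rz s n z = R * R'"
    unfolding R_def R'_def split_R[of n k z, OF less_imp_le[OF nk]] ..
  have km: "k + - n = int (Suc m)" unfolding m_def using nk by simp
  have pw: "z powi k * z powi (-n) = z * z ^ m"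
  proof -
    have "z powi k * z powi (-n) = z powi (k + - n)" using power_int_add[of z k "-n"] z by simp
    also have "\<dots> = z ^ Suc m" unfolding km by (rule power_int_of_nat)
    finally show ?thesis by simp
  qed
  have cardm: "card {n<..<k} = m" unfolding m_def by simp
  have PQ: "z ^ m * Q = P"
  proof -
    have "P = (\<Prod>j\<in>{n<..<k}. z * (1 + of_real (s j) / z))"
      unfolding P_def using z by (intro prod.cong) (auto simp: field_simps)
    also have "\<dots> = z ^ m * Q" unfolding Q_def prod.distrib cardm[symmetric] by simp
    finally show ?thesis by simp
  qed
  have BB: "z * L1 * B = (z + of_real (s n)) / (1 - of_real (s n) * z) - of_real (s n)"
  proof -
    have "z * L1 = z + of_real (s n)" unfolding L1_def using z by (simp add: field_simps)
    moreover have "B = 1 / L1 + 1 / (1 - of_real (s n) * z) - 1" unfolding B_def Bz_def L1_def ..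
    ultimately have "z * L1 * B = (z + of_real (s n)) * (1 / L1 + 1 / (1 - of_real (s n) * z) - 1)" by simp
    also have "\<dots> = (z + of_real (s n)) * (1 / L1) + (z + of_real (s n)) / (1 - of_real (s n) * z) - (z + of_real (s n))"
      by (simp add: distrib_left right_diff_distrib)
    also have "(z + of_real (s n)) * (1 / L1) = z"
    proof -
      have "(z + of_real (s n)) * (1 / L1) = z * (L1 / L1)" using \<open>z * L1 = z + of_real (s n)\<close>[symmetric] by simp
      thus ?thesis using L1nZ by simp
    qed
    also have "z + (z + of_real (s n)) / (1 - of_real (s n) * z) - (z + of_real (s n)) = (z + of_real (s n)) / (1 - of_real (s n) * z) - of_real (s n)"
      by simp
    finally show ?thesis .
  qed
  have cn: "c n \<noteq> 0" by (rule cnz)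
  have "Pz s c k z * Az s c n z =
        (of_real (c k) * z powi k * (L * (L1 * Q)) * R) * (z powi (-n) / (of_real (c n) * L * (R * R')) * B)"
    unfolding Pz_def Az_def eL eR B_def L_def R_def by simp
  also have "\<dots> = of_real (c k / c n) * (z powi k * z powi (-n)) * L1 * Q * B / R'
                   * ((L * R) / (L * R))"
    using cn by (simp add: field_simps)
  also have "\<dots> = of_real (c k / c n) * (z * z ^ m) * L1 * Q * B / R'"
    using LnZ RnZ pw by simp
  also have "\<dots> = of_real (c k / c n) * (z * L1 * B) * (z ^ m * Q) / R'"
    by (simp add: mult_ac)
  also have "\<dots> = hgt k n z" unfolding hgt_def BB PQ P_def R'_def by simp
  finally show ?thesis .
qed

lemma int_gt:
  assumes nk: "n < k"
  shows "((\<lambda>t. Pz s c k (cis t) * Az s c n (cis t)) has_integral 0) {0..2*pi}"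
proof -
  have pnz: "(\<Prod>j\<in>{n<..k}. 1 - of_real (s j) * z) \<noteq> 0" if "norm z \<le> 1" for z :: complex
    using nz_minus[OF sb that] by (simp add: prod_zero_iff)
  have snz: "1 - of_real (s n) * z \<noteq> 0" if "norm z \<le> 1" for z :: complex
    using nz_minus[OF sb that] by simp
  have nz1: "of_real (s a) * z \<noteq> 1" if "norm z \<le> 1" for a and z :: complex
    using nz_minus[OF sb that, of a] by simp
  have co: "continuous_on (cball 0 1) (hgt k n)" unfolding hgt_def
    by (intro continuous_intros) (use nz1 pnz snz in auto)
  have nz2: "of_real (s a) * z \<noteq> 1" if "norm z < 1" for a and z :: complex
    using nz1[of z a] that by simp
  have ho: "hgt k n holomorphic_on ball 0 1" unfolding hgt_def
    by (intro holomorphic_intros) (use nz2 in auto)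
  have h0: "hgt k n 0 = 0" unfolding hgt_def by simp
  have "((\<lambda>t. hgt k n (cis t)) has_integral 0) {0..2*pi}"
    using mean_value_circle[OF co ho] h0 by simp
  thus ?thesis
    by (rule has_integral_eq[rotated]) (simp add: gt_ident[OF _ nk])
qed

lemma int_all:
  "((\<lambda>t. Pz s c k (cis t) * Az s c n (cis t)) has_integral (if k = n then 2 * of_real pi else 0)) {0..2*pi}"
proof (cases "k = n")
  case True thus ?thesis using int_eq by simp
next
  case False
  show ?thesis
  proof (cases "n < k")
    case True thus ?thesis using int_gt False by simp
  next
    case False2: False
    hence lt: "-n < -k" using False by simp
    interpret T: seqs "\<lambda>j. - s (-j)" "\<lambda>j. c (-j)"
    proof
      show "\<bar>- s (- j)\<bar> < 1" for j using sb[of "-j"] by simp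
      show "c (- j) \<noteq> 0" for j using cnz[of "-j"] .
      have "{j. - s (- j) \<noteq> 0} = uminus ` {j. s j \<noteq> 0}" by (auto simp: image_iff) (metis minus_minus)
      thus "finite {j. - s (- j) \<noteq> 0}" using fin by simp
    qed
    have "((\<lambda>t. Pz (\<lambda>j. - s (-j)) (\<lambda>j. c (-j)) (-k) (1 / cis t) * Az (\<lambda>j. - s (-j)) (\<lambda>j. c (-j)) (-n) (1 / cis t)) has_integral 0) {0..2*pi}"
      using reflect_cis[OF T.int_gt[OF lt]] .
    hence "((\<lambda>t. Pz s c k (cis t) * Az s c n (cis t)) has_integral 0) {0..2*pi}"
      by (rule has_integral_eq[rotated]) (simp add: swap_ident[of _ s c k n])
    thus ?thesis using False by simp
  qed
qed

end


lemma e1: "exp (\<i> * of_int k * of_real \<theta>) = cis \<theta> powi k"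
  by (subst cis_power_int) (simp add: cis_conv_exp mult_ac)
lemma e2: "exp (- \<i> * of_int k * of_real \<theta>) = cis \<theta> powi (-k)"
  by (subst cis_power_int) (simp add: cis_conv_exp mult_ac)
lemma e3: "exp (- \<i> * of_real \<theta>) = 1 / cis \<theta>"
proof -
  have "exp (- \<i> * of_real \<theta>) = cis (- \<theta>)" by (simp add: cis_conv_exp)
  also have "\<dots> = inverse (cis \<theta>)" by (simp only: cis_inverse)
  finally show ?thesis by (simp add: divide_inverse)
qed
lemma e4: "exp (\<i> * of_real \<theta>) = cis \<theta>"
  by (simp add: cis_conv_exp)
lemma e5: "(1 / cis \<theta>) powi k = cis \<theta> powi (-k)"
  by (simp only: divide_inverse mult_1_left power_int_inverse power_int_minus)

theorem propositionF3:
  fixes \<gamma> :: "int \<Rightarrow> real"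
  assumes nonneg: "\<And>j. \<gamma> j \<ge> 0"
    and fin: "finite {j. \<gamma> j \<noteq> 0}"
    and small: "\<And>j. sinh (\<gamma> j) < 1"
  shows "\<forall>n k::int.
           ((\<lambda>\<theta>. phi_coeff \<gamma> k \<theta> * A \<gamma> n \<theta> / (2 * of_real pi))
              has_integral (if k = n then 1 else 0)) {0..2*pi}
         \<and> ((\<lambda>\<theta>. phi_star_coeff \<gamma> k \<theta> * A_star \<gamma> n \<theta> / (2 * of_real pi))
              has_integral (if k = n then 1 else 0)) {0..2*pi}"
proof (intro allI conjI)
  fix n k :: int
  have supp: "S \<gamma> j \<noteq> 0 \<longleftrightarrow> \<gamma> j \<noteq> 0" for j
    using sinh_real_pos_iff[of "\<gamma> j"] nonneg[of j] unfolding S_def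
    by (cases "\<gamma> j = 0") auto
  have sets1: "{j. j < m \<and> \<gamma> j \<noteq> 0} = {j. j < m \<and> S \<gamma> j \<noteq> 0}" for m using supp by auto
  have sets2: "{j. m < j \<and> \<gamma> j \<noteq> 0} = {j. m < j \<and> S \<gamma> j \<noteq> 0}" for m using supp by auto
  have sets3: "{j. j < m \<and> \<gamma> j \<noteq> 0} = {j. j < m \<and> - S \<gamma> j \<noteq> 0}" for m using supp by auto
  have sets4: "{j. m < j \<and> \<gamma> j \<noteq> 0} = {j. m < j \<and> - S \<gamma> j \<noteq> 0}" for m using supp by auto
  have sb: "\<bar>S \<gamma> j\<bar> < 1" for j
    using small[of j] sinh_real_nonneg_iff[of "\<gamma> j"] nonneg[of j] unfolding S_def by simp
  have fS: "finite {j. S \<gamma> j \<noteq> 0}" using fin supp by simp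
  have fS': "finite {j. - S \<gamma> j \<noteq> 0}" using fin supp by simp
  have cnz: "C \<gamma> j \<noteq> 0" for j unfolding C_def by simp
  interpret A1: seqs "S \<gamma>" "C \<gamma>" using sb fS cnz by unfold_locales auto
  interpret A2: seqs "\<lambda>j. - S \<gamma> j" "C \<gamma>" using sb fS' cnz by unfold_locales auto
  have div: "((\<lambda>t. F t / (2 * of_real pi)) has_integral (if k = n then 1 else 0)) {0..2*pi}"
    if "(F has_integral (if k = n then 2 * of_real pi else 0)) {0..2*pi}" for F :: "real \<Rightarrow> complex"
  proof -
    have nz: "(2 * of_real pi :: complex) \<noteq> 0" using pi_gt_zero by simp
    have val: "(if k = n then 2 * of_real pi else 0) * inverse (2 * of_real pi) = (if k = n then 1 else (0::complex))"
      using right_inverse[OF nz] by simp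
    have "((\<lambda>t. F t / (2 * of_real pi)) has_integral ((if k = n then 2 * of_real pi else 0) * inverse (2 * of_real pi))) {0..2*pi}"
      using has_integral_mult_left[OF that, of "inverse (2 * of_real pi)"] by (simp only: divide_inverse)
    thus ?thesis unfolding val .
  qed
  show "((\<lambda>\<theta>. phi_coeff \<gamma> k \<theta> * A \<gamma> n \<theta> / (2 * of_real pi)) has_integral (if k = n then 1 else 0)) {0..2*pi}"
  proof (rule div)
    show "((\<lambda>\<theta>. phi_coeff \<gamma> k \<theta> * A \<gamma> n \<theta>) has_integral (if k = n then 2 * of_real pi else 0)) {0..2*pi}"
    proof (rule has_integral_eq[rotated, OF A1.int_all[of k n]])
      fix \<theta>
      show "Pz (S \<gamma>) (C \<gamma>) k (cis \<theta>) * Az (S \<gamma>) (C \<gamma>) n (cis \<theta>) = phi_coeff \<gamma> k \<theta> * A \<gamma> n \<theta>"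
        unfolding Pz_def Az_def phi_coeff_def A_def Lz_def Rz_def Lprod_def Rprod_def Bz_def Bracket_def
          e1 e2 e3 e4 sets1 sets2
        by (simp only: times_divide_eq_right mult_1_right)
    qed
  qed
  show "((\<lambda>\<theta>. phi_star_coeff \<gamma> k \<theta> * A_star \<gamma> n \<theta> / (2 * of_real pi)) has_integral (if k = n then 1 else 0)) {0..2*pi}"
  proof (rule div)
    show "((\<lambda>\<theta>. phi_star_coeff \<gamma> k \<theta> * A_star \<gamma> n \<theta>) has_integral (if k = n then 2 * of_real pi else 0)) {0..2*pi}"
    proof (rule has_integral_eq[rotated, OF reflect_cis[OF A2.int_all[of k n]]])
      fix \<theta>
      show "Pz (\<lambda>j. - S \<gamma> j) (C \<gamma>) k (1 / cis \<theta>) * Az (\<lambda>j. - S \<gamma> j) (C \<gamma>) n (1 / cis \<theta>) = phi_star_coeff \<gamma> k \<theta> * A_star \<gamma> n \<theta>"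
        unfolding Pz_def Az_def phi_star_coeff_def A_star_def Lz_def Rz_def Lprod_star_def Rprod_star_def Bz_def Bracket_def
          e1 e2 e3 e4 e5 sets3 sets4
        apply (simp only: of_real_minus divide_divide_eq_right div_by_1 mult_minus_left diff_minus_eq_add add_uminus_conv_diff minus_minus)
        apply (simp only: add.commute)
        done
    qed
  qed
qed

end
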